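(* Let $T$ be a (planted) phylogenetic tree with leaf set $L$ and species map $\sigma:L\to\mathscr{S}$. Let $x\in L$, let $s\in\mathscr{S}$ with $s\neq\sigma(x)$, and let $L[s]=\{y\in L:\sigma(y)=s\}$. Let $Y\subseteq L[s]$ contain every best match of $x$ in species $s$, and let $Z\subseteq L$ be a non-empty set of leaves each of which is an outgroup for $Y\cup\{x\}$. Define a digraph $\Gamma$ on vertex set $Y$ as follows: for each pair of distinct $y',y''\in Y$ choose some $z\in Z$ and determine $Q=\overline{T}[x,y',y'',z]$ (which is assumed to be obtained correctly); if $Q\in\{(xz|y'y''),\times\}$ insert both arcs $(y',y'')$ and $(y'',y')$; if $Q=(xy'|y''z)$ insert the arc $(y'',y')$; if $Q=(xy''|y'z)$ insert the arc $(y',y'')$. Then $\Gamma$ has a unique strongly connected component without out-edges, and its vertex set is exactly the set $\{y\in L[s]: x\to y\}$ of best matches of $x$ in species $s$.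
   Context: A planted phylogenetic tree $T$ has a distinguished leaf $0_T$ (planted root) whose unique neighbour $\rho_T$ is the root; every other inner vertex has at least two children; $L$ is the set of leaves other than $0_T$. $a\preceq b$ means $b$ lies on the path from $a$ to $0_T$; $\operatorname{lca}(A)$ is the $\preceq$-minimal vertex above all of $A$. Best match: $y\in L$ is a best match of $x\in L$, written $x\to y$, if $\operatorname{lca}(x,y)\preceq\operatorname{lca}(x,y')$ for all $y'\in L$ with $\sigma(y')=\sigma(y)$. For $L'\subseteq L$ and $z\in L\setminus L'$, $z$ is an outgroup for $L'$ if $\operatorname{lca}(L')\prec\operatorname{lca}(L'\cup\{z\})$. The unrooted tree $\overline{T}$ is obtained from $T$ by deleting $0_T$ and its edge and, if $\rho_T$ has exactly two children, suppressing $\rho_T$. For four leaves $p,q,r,s$, $\overline{T}[p,q,r,s]$ is the subtree of $\overline{T}$ spanned by them with degree-2 vertices suppressed; $\overline{T}[p,q,r,s]=(pq|rs)$ if some edge of it separates $\{p,q\}$ from $\{r,s\}$, and $\overline{T}[p,q,r,s]=\times$ (star tree) if no such separating edge exists for any of the three splits. An arc $(a,b)$ of $\Gamma$ is an out-edge of a strongly connected component $B$ if $a\in B$, $b\notin B$. *)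

theory Defs
  imports Main
begin

text \<open>A planted tree is given by a vertex set V, an arc set E of parent-to-child
arcs, and the planted root r0 (the leaf 0_T).\<close>

definition children :: "('v \<times> 'v) set \<Rightarrow> 'v \<Rightarrow> 'v set" where
  "children E v = {w. (v, w) \<in> E}"

definition planted_phylo_tree :: "'v set \<Rightarrow> ('v \<times> 'v) set \<Rightarrow> 'v \<Rightarrow> bool" where
  "planted_phylo_tree V E r0 \<longleftrightarrow>
     finite V \<and> r0 \<in> V \<and> E \<subseteq> V \<times> V \<and>
     (\<forall>v. (v, r0) \<notin> E) \<and>
     (\<forall>v\<in>V. v \<noteq> r0 \<longrightarrow> (\<exists>!u. (u, v) \<in> E)) \<and>
     (\<forall>v\<in>V. (r0, v) \<in> E\<^sup>*) \<and>
     card (children E r0) = 1 \<and>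
     (\<forall>v\<in>V. v \<noteq> r0 \<longrightarrow> children E v \<noteq> {} \<longrightarrow> card (children E v) \<ge> 2)"

definition root_rho :: "('v \<times> 'v) set \<Rightarrow> 'v \<Rightarrow> 'v" where
  "root_rho E r0 = (THE v. (r0, v) \<in> E)"

definition leaves :: "'v set \<Rightarrow> ('v \<times> 'v) set \<Rightarrow> 'v \<Rightarrow> 'v set" where
  "leaves V E r0 = {v \<in> V. v \<noteq> r0 \<and> children E v = {}}"

text \<open>a \<preceq> b : b lies on the path from a to 0_T, i.e. b is an ancestor of a (or a itself).\<close>
definition anc_le :: "('v \<times> 'v) set \<Rightarrow> 'v \<Rightarrow> 'v \<Rightarrow> bool" where
  "anc_le E a b \<longleftrightarrow> (b, a) \<in> E\<^sup>*"

definition anc_less :: "('v \<times> 'v) set \<Rightarrow> 'v \<Rightarrow> 'v \<Rightarrow> bool" where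
  "anc_less E a b \<longleftrightarrow> anc_le E a b \<and> a \<noteq> b"

definition lca :: "'v set \<Rightarrow> ('v \<times> 'v) set \<Rightarrow> 'v set \<Rightarrow> 'v" where
  "lca V E A = (THE v. v \<in> V \<and> (\<forall>a\<in>A. anc_le E a v) \<and>
                   (\<forall>w\<in>V. (\<forall>a\<in>A. anc_le E a w) \<longrightarrow> anc_le E v w))"

definition best_match :: "'v set \<Rightarrow> ('v \<times> 'v) set \<Rightarrow> 'v \<Rightarrow> ('v \<Rightarrow> 's) \<Rightarrow> 'v \<Rightarrow> 'v \<Rightarrow> bool" where
  "best_match V E r0 \<sigma> x y \<longleftrightarrow> x \<in> leaves V E r0 \<and> y \<in> leaves V E r0 \<and>
     (\<forall>y'\<in>leaves V E r0. \<sigma> y' = \<sigma> y \<longrightarrow> anc_le E (lca V E {x, y}) (lca V E {x, y'}))"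

definition outgroup :: "'v set \<Rightarrow> ('v \<times> 'v) set \<Rightarrow> 'v \<Rightarrow> 'v set \<Rightarrow> 'v \<Rightarrow> bool" where
  "outgroup V E r0 L' z \<longleftrightarrow> L' \<subseteq> leaves V E r0 \<and> z \<in> leaves V E r0 - L' \<and>
     anc_less E (lca V E L') (lca V E (L' \<union> {z}))"

text \<open>Edge set of the unrooted tree Tbar, as a symmetric relation: delete 0_T and its edge;
  if rho_T has exactly two children, suppress rho_T.\<close>
definition tbar_edges :: "('v \<times> 'v) set \<Rightarrow> 'v \<Rightarrow> ('v \<times> 'v) set" where
  "tbar_edges E r0 =
     (let base = {(u, v). (u, v) \<in> E \<and> u \<noteq> r0} \<union> {(v, u). (u, v) \<in> E \<and> u \<noteq> r0};
          \<rho> = root_rho E r0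
      in if card (children E \<rho>) = 2
         then {(u, v). (u, v) \<in> base \<and> u \<noteq> \<rho> \<and> v \<noteq> \<rho>} \<union>
              {(c1, c2). c1 \<in> children E \<rho> \<and> c2 \<in> children E \<rho> \<and> c1 \<noteq> c2}
         else base)"

definition separates :: "('v \<times> 'v) set \<Rightarrow> ('v \<times> 'v) \<Rightarrow> 'v \<Rightarrow> 'v \<Rightarrow> 'v \<Rightarrow> 'v \<Rightarrow> bool" where
  "separates U e p q r s \<longleftrightarrow> e \<in> U \<and>
     (let U' = U - {e, (snd e, fst e)} in
        (p, q) \<in> U'\<^sup>* \<and> (r, s) \<in> U'\<^sup>* \<and> (p, r) \<notin> U'\<^sup>*)"

text \<open>Quartet Tbar[p,q,r,s] = (pq|rs): some edge of the spanned subtree separates {p,q}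
  from {r,s}.  (Every edge of the spanned subtree with degree-2 vertices suppressed
  corresponds to a path of Tbar-edges, each of which separates the same bipartition, and
  edges of Tbar outside the spanned subtree separate no two of the four leaves; so this
  is the same as the existence of a separating edge of Tbar.)\<close>
definition quartet :: "('v \<times> 'v) set \<Rightarrow> 'v \<Rightarrow> 'v \<Rightarrow> 'v \<Rightarrow> 'v \<Rightarrow> 'v \<Rightarrow> bool" where
  "quartet E r0 p q r s \<longleftrightarrow> (\<exists>e. separates (tbar_edges E r0) e p q r s)"

definition quartet_star :: "('v \<times> 'v) set \<Rightarrow> 'v \<Rightarrow> 'v \<Rightarrow> 'v \<Rightarrow> 'v \<Rightarrow> 'v \<Rightarrow> bool" where
  "quartet_star E r0 p q r s \<longleftrightarrow>
     \<not> quartet E r0 p q r s \<and> \<not> quartet E r0 p r q s \<and> \<not> quartet E r0 p s q r"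

text \<open>The digraph Gamma on Y, given the chosen outgroup ch y' y'' for each pair.
  Arc (a,b) is inserted iff Q = (xz|ab), Q = star, or Q = (xb|az).\<close>
definition gamma_arcs :: "('v \<times> 'v) set \<Rightarrow> 'v \<Rightarrow> 'v \<Rightarrow> 'v set \<Rightarrow> ('v \<Rightarrow> 'v \<Rightarrow> 'v) \<Rightarrow> ('v \<times> 'v) set" where
  "gamma_arcs E r0 x Y ch = {(a, b). a \<in> Y \<and> b \<in> Y \<and> a \<noteq> b \<and>
      (quartet E r0 x (ch a b) a b \<or> quartet_star E r0 x a b (ch a b) \<or>
       quartet E r0 x b a (ch a b))}"

definition is_scc :: "'v set \<Rightarrow> ('v \<times> 'v) set \<Rightarrow> 'v set \<Rightarrow> bool" where
  "is_scc W A B \<longleftrightarrow> (\<exists>u\<in>W. B = {v\<in>W. (u, v) \<in> A\<^sup>* \<and> (v, u) \<in> A\<^sup>*})"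

definition has_out_edge :: "('v \<times> 'v) set \<Rightarrow> 'v set \<Rightarrow> bool" where
  "has_out_edge A B \<longleftrightarrow> (\<exists>a b. (a, b) \<in> A \<and> a \<in> B \<and> b \<notin> B)"

end

theory Submission
  imports Defs
begin

lemma rtrancl_sym_lemma:
  assumes "\<forall>a b. (a,b)\<in>R \<longrightarrow> (b,a)\<in>R" "(p,q)\<in>R\<^sup>*" shows "(q,p)\<in>R\<^sup>*"
  using assms(2) by induction (auto, metis assms(1) converse_rtrancl_into_rtrancl)

lemma rtrancl_closed:
  assumes "\<forall>a b. (a,b)\<in>R \<longrightarrow> a\<in>D \<longrightarrow> b\<in>D" "(p,q)\<in>R\<^sup>*" "p\<in>D" shows "q\<in>D"
  using assms(2,3) by induction (use assms(1) in blast)+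

lemma conn_generic:
  assumes sym: "\<forall>a b. (a,b)\<in>R \<longrightarrow> (b,a)\<in>R"
    and clos: "\<forall>a b. (a,b)\<in>R \<longrightarrow> a\<in>D \<longrightarrow> b\<in>D"
    and inn: "\<forall>p\<in>P. p\<in>D \<longrightarrow> (wi,p)\<in>R\<^sup>*"
    and out: "\<forall>p\<in>P. p\<notin>D \<longrightarrow> (wo,p)\<in>R\<^sup>*"
    and pq: "p\<in>P" "q\<in>P"
  shows "(p,q)\<in>R\<^sup>* \<longleftrightarrow> (p\<in>D \<longleftrightarrow> q\<in>D)"
proof
  assume h: "(p,q)\<in>R\<^sup>*"
  have "(q,p)\<in>R\<^sup>*" using rtrancl_sym_lemma[OF sym h] .
  then show "p\<in>D \<longleftrightarrow> q\<in>D" using rtrancl_closed[OF clos] h by blast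
next
  assume h: "p\<in>D \<longleftrightarrow> q\<in>D"
  show "(p,q)\<in>R\<^sup>*"
  proof (cases "p\<in>D")
    case True
    then have "(wi,p)\<in>R\<^sup>*" "(wi,q)\<in>R\<^sup>*" using inn h pq by auto
    then show ?thesis using rtrancl_sym_lemma[OF sym] rtrancl_trans by metis
  next
    case False
    then have "(wo,p)\<in>R\<^sup>*" "(wo,q)\<in>R\<^sup>*" using out h pq by auto
    then show ?thesis using rtrancl_sym_lemma[OF sym] rtrancl_trans by metis
  qed
qed

lemma path_lift:
  assumes "(w0,p)\<in>E\<^sup>*"
    and "\<forall>w1 w2. (w0,w1)\<in>E\<^sup>* \<longrightarrow> (w1,w2)\<in>E \<longrightarrow> (w2,p)\<in>E\<^sup>* \<longrightarrow> (w1,w2)\<in>R"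
  shows "(w0,p)\<in>R\<^sup>*"
  using assms
proof (induction rule: rtrancl_induct)
  case base then show ?case by simp
next
  case (step y z)
  have "(w0,y)\<in>R\<^sup>*" using step.IH step.prems step.hyps(2)
    by (meson rtrancl_into_rtrancl)
  moreover have "(y,z)\<in>R" using step by auto
  ultimately show ?case by (rule rtrancl_into_rtrancl)
qed

lemma max_ex:
  assumes "finite S" "S \<noteq> {}" "\<forall>a b. bt a b \<or> bt b a" "\<forall>a b c. bt a b \<longrightarrow> bt b c \<longrightarrow> bt a c"
  shows "\<exists>m\<in>S. \<forall>y\<in>S. bt y m"
  using assms(1,2)
proof (induction rule: finite_ne_induct)
  case (singleton x) then show ?case using assms(3) by auto
next
  case (insert a F)
  then obtain m where m: "m\<in>F" "\<forall>y\<in>F. bt y m" by auto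
  show ?case
  proof (cases "bt m a")
    case True then show ?thesis using m assms(3,4) by blast
  next
    case False then have "bt a m" using assms(3) by blast
    then show ?thesis using m by blast
  qed
qed

lemma scc_part:
  fixes bt :: "'v \<Rightarrow> 'v \<Rightarrow> bool"
  assumes refl: "\<forall>a. bt a a" and trans: "\<forall>a b c. bt a b \<longrightarrow> bt b c \<longrightarrow> bt a c"
    and total: "\<forall>a b. bt a b \<or> bt b a"
    and fin: "finite Y" and ne: "Y \<noteq> {}"
    and A: "A = {(a,b). a\<in>Y \<and> b\<in>Y \<and> a\<noteq>b \<and> bt a b}"
  shows "(\<exists>!B. is_scc Y A B \<and> \<not> has_out_edge A B) \<and>
         (\<forall>B. is_scc Y A B \<and> \<not> has_out_edge A B \<longrightarrow> B = {y\<in>Y. \<forall>y'\<in>Y. bt y' y})"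
proof -
  have st1: "bt a b" if "(a,b)\<in>A\<^sup>*" for a b
    using that
  proof induction
    case base show ?case using refl by simp
  next
    case (step y z)
    then have "bt y z" using A by simp
    then show ?case using step.IH trans by blast
  qed
  have st: "(a,b)\<in>A\<^sup>* \<longleftrightarrow> bt a b" if "a\<in>Y" "b\<in>Y" for a b
  proof
    assume "bt a b" then show "(a,b)\<in>A\<^sup>*"
      by (cases "a = b") (use that A in auto)
  qed (rule st1)
  have scc: "is_scc Y A B \<longleftrightarrow> (\<exists>u\<in>Y. B = {v\<in>Y. bt u v \<and> bt v u})" for B
    unfolding is_scc_def
  proof (rule bex_cong[OF HOL.refl])
    fix u assume u: "u\<in>Y"
    have "{v\<in>Y. (u,v)\<in>A\<^sup>* \<and> (v,u)\<in>A\<^sup>*} = {v\<in>Y. bt u v \<and> bt v u}"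
      using u by (auto simp: st)
    then show "(B = {v\<in>Y. (u,v)\<in>A\<^sup>* \<and> (v,u)\<in>A\<^sup>*}) = (B = {v\<in>Y. bt u v \<and> bt v u})" by simp
  qed
  define M where "M = {y\<in>Y. \<forall>y'\<in>Y. bt y' y}"
  obtain m where m: "m\<in>Y" "\<forall>y\<in>Y. bt y m" using max_ex[OF fin ne total trans] by blast
  have key: "B = M" if "is_scc Y A B" "\<not> has_out_edge A B" for B
  proof -
    have "\<exists>u\<in>Y. B = {v\<in>Y. bt u v \<and> bt v u}" using that(1) scc by simp
    then obtain u where u: "u\<in>Y" "B = {v\<in>Y. bt u v \<and> bt v u}" by blast
    have uM: "bt y' u" if "y'\<in>Y" for y'
    proof (rule ccontr)
      assume nb: "\<not> bt y' u"
      then have "bt u y'" using total by blast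
      moreover have "y' \<noteq> u" using nb refl by blast
      ultimately have "(u,y')\<in>A" using A u that by auto
      moreover have "u \<in> B" using u refl by auto
      ultimately have "y' \<in> B" using \<open>\<not> has_out_edge A B\<close> unfolding has_out_edge_def by blast
      then show False using nb u by auto
    qed
    show ?thesis
    proof (intro set_eqI iffI)
      fix v assume "v \<in> B"
      then have v: "v\<in>Y" "bt u v" using u by auto
      have "bt y' v" if "y'\<in>Y" for y'
        using trans uM[OF that] v(2) by blast
      then show "v \<in> M" unfolding M_def using v by blast
    next
      fix v assume "v \<in> M"
      then have v: "v\<in>Y" "\<forall>y'\<in>Y. bt y' v" unfolding M_def by auto
      then show "v \<in> B" using u uM by auto
    qed
  qed
  have good: "is_scc Y A M \<and> \<not> has_out_edge A M"
  proof
    have "M = {v\<in>Y. bt m v \<and> bt v m}"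
    proof (intro set_eqI iffI)
      fix v assume "v \<in> M" then show "v \<in> {v\<in>Y. bt m v \<and> bt v m}"
        unfolding M_def using m by auto
    next
      fix v assume v: "v \<in> {v\<in>Y. bt m v \<and> bt v m}"
      have "bt y' v" if "y'\<in>Y" for y'
        using trans m(2) that v by blast
      then show "v \<in> M" unfolding M_def using v by blast
    qed
    then show "is_scc Y A M" unfolding scc using m(1) by blast
    show "\<not> has_out_edge A M"
    proof
      assume "has_out_edge A M"
      then obtain a b where ab: "(a,b)\<in>A" "a\<in>M" "b\<notin>M" unfolding has_out_edge_def by blast
      then have b: "b\<in>Y" "bt a b" using A by auto
      have "bt y' b" if "y'\<in>Y" for y'
        using trans ab(2) that b unfolding M_def by blast
      then show False using ab(3) b unfolding M_def by blast
    qed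
  qed
  have k2: "\<forall>B. is_scc Y A B \<and> \<not> has_out_edge A B \<longrightarrow> B = M" using key by blast
  have k1: "\<exists>!B. is_scc Y A B \<and> \<not> has_out_edge A B" using good key by blast
  show ?thesis using k1 k2 unfolding M_def by (rule conjI)
qed

locale ptree =
  fixes V :: "'v set" and E :: "('v \<times> 'v) set" and r0 :: 'v
  assumes T: "planted_phylo_tree V E r0"
begin

lemma finV: "finite V" using T unfolding planted_phylo_tree_def by blast
lemma r0V: "r0 \<in> V" using T unfolding planted_phylo_tree_def by blast
lemma EV: "E \<subseteq> V \<times> V" using T unfolding planted_phylo_tree_def by blast
lemma noin: "(v, r0) \<notin> E" using T unfolding planted_phylo_tree_def by blast
lemma upar: "v \<in> V \<Longrightarrow> v \<noteq> r0 \<Longrightarrow> \<exists>!u. (u,v)\<in>E" using T unfolding planted_phylo_tree_def by blast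
lemma reach: "v\<in>V \<Longrightarrow> (r0,v)\<in>E\<^sup>*" using T unfolding planted_phylo_tree_def by blast
lemma card1: "card (children E r0) = 1" using T unfolding planted_phylo_tree_def by blast

lemma inV1: "(a,b)\<in>E \<Longrightarrow> a\<in>V \<and> b\<in>V" using EV by auto

lemma par_unique: "(u,v)\<in>E \<Longrightarrow> (u',v)\<in>E \<Longrightarrow> u = u'"
  using upar[of v] inV1 noin by metis

lemma inV_star: "(a,b)\<in>E\<^sup>* \<Longrightarrow> b\<in>V \<Longrightarrow> a\<in>V"
  by (erule converse_rtranclE) (auto dest: inV1)

lemma no_cycle: "(v,v)\<notin>E\<^sup>+"
proof
  assume c: "(v,v)\<in>E\<^sup>+"
  then obtain w where "(v,w)\<in>E" using tranclD by force
  then have vV: "v\<in>V" using inV1 by blast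
  have "(w,w)\<notin>E\<^sup>+" if "(r0,w)\<in>E\<^sup>*" for w
    using that
  proof (induction rule: rtrancl_induct)
    case base
    show ?case
    proof
      assume "(r0,r0)\<in>E\<^sup>+"
      then obtain z where "(z,r0)\<in>E" using tranclD2 by force
      then show False using noin by blast
    qed
  next
    case (step a b)
    show ?case
    proof
      assume "(b,b)\<in>E\<^sup>+"
      then obtain c where c: "(b,c)\<in>E\<^sup>*" "(c,b)\<in>E" using tranclD2 by force
      then have "c = a" using par_unique step.hyps(2) by blast
      then have "(a,a)\<in>E\<^sup>+" using c(1) step.hyps(2) by (meson rtrancl_into_trancl2)
      then show False using step.IH by blast
    qed
  qed
  then show False using c reach vV by blast
qed

lemma anti: "(a,b)\<in>E\<^sup>* \<Longrightarrow> (b,a)\<in>E\<^sup>* \<Longrightarrow> a = b"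
  by (metis no_cycle rtrancl_eq_or_trancl rtrancl_trancl_trancl)

lemma no_back: "(a,b)\<in>E \<Longrightarrow> (b,a)\<in>E\<^sup>* \<Longrightarrow> False"
  using no_cycle rtrancl_into_trancl2 by metis

lemma chain: "(u,a)\<in>E\<^sup>* \<Longrightarrow> (w,a)\<in>E\<^sup>* \<Longrightarrow> (u,w)\<in>E\<^sup>* \<or> (w,u)\<in>E\<^sup>*"
proof (induction a arbitrary: w rule: rtrancl_induct)
  case base then show ?case by simp
next
  case (step b c)
  from step.prems show ?case
  proof (cases rule: rtranclE)
    case base then show ?thesis using step.hyps by (meson rtrancl.rtrancl_into_rtrancl)
  next
    case (step b')
    then have "b' = b" using par_unique \<open>(b,c)\<in>E\<close> by blast
    then show ?thesis using step.IH step(1) by blast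
  qed
qed

lemma not_below_r0: "(v,r0)\<in>E\<^sup>* \<Longrightarrow> v = r0"
  by (erule rtranclE) (auto simp: noin)

definition rho where "rho = root_rho E r0"

lemma ch_r0: "children E r0 = {rho}"
proof -
  obtain c where c: "children E r0 = {c}" using card1 card_1_singletonE by blast
  then have "rho = c" unfolding rho_def root_rho_def children_def
    by (rule_tac the_equality) (auto simp: set_eq_iff)
  then show ?thesis using c by simp
qed

lemma r0_rho: "(r0,rho)\<in>E" using ch_r0 unfolding children_def by blast
lemma r0_child: "(r0,w)\<in>E \<Longrightarrow> w = rho" using ch_r0 unfolding children_def by blast
lemma rho_ne: "rho \<noteq> r0" using r0_rho noin by metis
lemma rhoV: "rho \<in> V" using r0_rho inV1 by blast

lemma rho_anc: "v\<in>V \<Longrightarrow> v\<noteq>r0 \<Longrightarrow> (rho,v)\<in>E\<^sup>*"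
  using reach[of v] by (auto elim: converse_rtranclE dest: r0_child)

lemma anc_rho: "(v,rho)\<in>E\<^sup>* \<Longrightarrow> v = rho \<or> v = r0"
proof (erule rtranclE)
  fix w assume "(v,w)\<in>E\<^sup>*" "(w,rho)\<in>E"
  then have "w = r0" using par_unique r0_rho by blast
  then show ?thesis using not_below_r0 \<open>(v,w)\<in>E\<^sup>*\<close> by blast
qed simp

lemma leafD: "p\<in>leaves V E r0 \<Longrightarrow> p\<in>V \<and> p\<noteq>r0 \<and> (\<forall>w. (p,w)\<notin>E)"
  by (auto simp: leaves_def children_def)

end

context ptree begin

definition B0 where "B0 = {(u,v). (u,v)\<in>E \<and> u\<noteq>r0} \<union> {(v,u). (u,v)\<in>E \<and> u\<noteq>r0}"

definition good where
  "good R v \<longleftrightarrow> (\<forall>p\<in>leaves V E r0. \<forall>q\<in>leaves V E r0. (p,q)\<in>R\<^sup>* \<longleftrightarrow> ((v,p)\<in>E\<^sup>* \<longleftrightarrow> (v,q)\<in>E\<^sup>*))"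

lemma goodI:
  assumes sym: "\<forall>a b. (a,b)\<in>R \<longrightarrow> (b,a)\<in>R"
    and clos: "\<And>a b. (a,b)\<in>R \<Longrightarrow> (v,a)\<in>E\<^sup>* \<Longrightarrow> (v,b)\<in>E\<^sup>*"
    and inn: "\<And>p. p\<in>leaves V E r0 \<Longrightarrow> (v,p)\<in>E\<^sup>* \<Longrightarrow> (wi,p)\<in>R\<^sup>*"
    and out: "\<And>p. p\<in>leaves V E r0 \<Longrightarrow> (v,p)\<notin>E\<^sup>* \<Longrightarrow> (wo,p)\<in>R\<^sup>*"
  shows "good R v"
  unfolding good_def
proof (intro ballI)
  fix p q assume pq: "p\<in>leaves V E r0" "q\<in>leaves V E r0"
  define D where "D = {w. (v,w)\<in>E\<^sup>*}"
  have c: "\<forall>a b. (a,b)\<in>R \<longrightarrow> a\<in>D \<longrightarrow> b\<in>D" using clos unfolding D_def by blast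
  have i: "\<forall>p\<in>leaves V E r0. p\<in>D \<longrightarrow> (wi,p)\<in>R\<^sup>*" using inn unfolding D_def by blast
  have o: "\<forall>p\<in>leaves V E r0. p\<notin>D \<longrightarrow> (wo,p)\<in>R\<^sup>*" using out unfolding D_def by blast
  show "(p,q)\<in>R\<^sup>* \<longleftrightarrow> ((v,p)\<in>E\<^sup>* \<longleftrightarrow> (v,q)\<in>E\<^sup>*)"
    using conn_generic[OF sym c i o pq] unfolding D_def by simp
qed

lemma edge_B0: "(a,b)\<in>E \<Longrightarrow> a\<noteq>r0 \<Longrightarrow> (a,b)\<in>B0" by (auto simp: B0_def)

lemma clos_core:
  assumes "(u,v)\<in>E" "(a,b)\<in>B0" "\<not>(a = v \<and> b = u)" "(v,a)\<in>E\<^sup>*"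
  shows "(v,b)\<in>E\<^sup>*"
proof (cases "(a,b)\<in>E")
  case True then show ?thesis using assms(4) by (meson rtrancl.rtrancl_into_rtrancl)
next
  case False
  then have ba: "(b,a)\<in>E" using assms(2) by (auto simp: B0_def)
  show ?thesis
  proof (cases "a = v")
    case True then have "b = u" using par_unique ba assms(1) by blast
    then show ?thesis using assms(3) True by blast
  next
    case False
    then obtain a' where "(v,a')\<in>E\<^sup>*" "(a',a)\<in>E" using assms(4) by (auto elim: rtranclE)
    then show ?thesis using par_unique ba by blast
  qed
qed

lemma core_ns:
  assumes uv: "(u,v)\<in>E" "u\<noteq>r0"
  shows "good (B0 - {(u,v),(v,u)}) v"
proof (rule goodI[where wi=v and wo=rho])
  show "\<forall>a b. (a,b)\<in>B0 - {(u,v),(v,u)} \<longrightarrow> (b,a)\<in>B0 - {(u,v),(v,u)}" by (auto simp: B0_def)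
next
  fix a b assume ab: "(a,b)\<in>B0 - {(u,v),(v,u)}" and va: "(v,a)\<in>E\<^sup>*"
  show "(v,b)\<in>E\<^sup>*" using clos_core[OF uv(1) _ _ va] ab by blast
next
  fix p assume p: "p\<in>leaves V E r0" "(v,p)\<in>E\<^sup>*"
  show "(v,p)\<in>(B0 - {(u,v),(v,u)})\<^sup>*"
  proof (rule path_lift[OF p(2)], intro allI impI)
    fix w1 w2 assume w: "(v,w1)\<in>E\<^sup>*" "(w1,w2)\<in>E" "(w2,p)\<in>E\<^sup>*"
    have "w1 \<noteq> r0" using w(1) not_below_r0 uv noin by metis
    moreover have "w1 \<noteq> u" using w(1) uv(1) no_back by blast
    moreover have "\<not>(w1 = v \<and> w2 = u)" using w(2) uv(1) no_back by (metis r_into_rtrancl)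
    ultimately show "(w1,w2)\<in>B0 - {(u,v),(v,u)}" using w(2) edge_B0 by auto
  qed
next
  fix p assume p: "p\<in>leaves V E r0" "(v,p)\<notin>E\<^sup>*"
  have rp: "(rho,p)\<in>E\<^sup>*" using rho_anc leafD p(1) by blast
  show "(rho,p)\<in>(B0 - {(u,v),(v,u)})\<^sup>*"
  proof (rule path_lift[OF rp], intro allI impI)
    fix w1 w2 assume w: "(rho,w1)\<in>E\<^sup>*" "(w1,w2)\<in>E" "(w2,p)\<in>E\<^sup>*"
    have "w1 \<noteq> r0" using w(1) not_below_r0 rho_ne by blast
    moreover have "w2 \<noteq> v" using w(3) p(2) by blast
    moreover have "w1 \<noteq> v" using w(2,3) p(2) by (meson converse_rtrancl_into_rtrancl)
    ultimately show "(w1,w2)\<in>B0 - {(u,v),(v,u)}" using w(2) edge_B0 by auto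
  qed
qed

lemma child_path:
  assumes ch: "children E rho = {c1,c2}" and c: "c \<in> {c1,c2}" and w: "(c,w1)\<in>E\<^sup>*" "(w1,w2)\<in>E"
  shows "w1\<noteq>r0 \<and> w1\<noteq>rho \<and> w2\<noteq>rho \<and> w2 \<notin> {c1,c2}"
proof -
  have rc: "(rho,c)\<in>E" using ch c unfolding children_def by blast
  have cw2: "(c,w2)\<in>E\<^sup>*" using w by (meson rtrancl.rtrancl_into_rtrancl)
  have "w1 \<noteq> r0" using w(1) not_below_r0 rc noin by metis
  moreover have "w1 \<noteq> rho" using w(1) rc no_back by blast
  moreover have "w2 \<noteq> rho" using cw2 rc no_back by blast
  moreover have "w2 \<notin> {c1,c2}"
  proof
    assume "w2 \<in> {c1,c2}"
    then have "(rho,w2)\<in>E" using ch unfolding children_def by blast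
    then have "w1 = rho" using par_unique w(2) by blast
    then show False using \<open>w1 \<noteq> rho\<close> by blast
  qed
  ultimately show ?thesis by blast
qed

lemma leaf_split:
  assumes ch: "children E rho = {c1,c2}" and p: "p\<in>leaves V E r0"
  shows "(c1,p)\<in>E\<^sup>* \<or> (c2,p)\<in>E\<^sup>*"
proof -
  have rp: "(rho,p)\<in>E\<^sup>*" using rho_anc leafD p by blast
  have "(rho,c1)\<in>E" using ch unfolding children_def by blast
  then have "p \<noteq> rho" using leafD p by blast
  then obtain c where c: "(rho,c)\<in>E" "(c,p)\<in>E\<^sup>*" using rp by (auto elim: converse_rtranclE)
  then have "c\<in>{c1,c2}" using ch unfolding children_def by blast
  then show ?thesis using c by auto
qed

lemma core_s1:
  assumes ch: "children E rho = {c1,c2}" "c1\<noteq>c2"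
    and uv: "(u,v)\<in>E" "u\<noteq>r0" "u\<noteq>rho"
  shows "good (({(a,b)\<in>B0. a\<noteq>rho \<and> b\<noteq>rho} \<union> {(c1,c2),(c2,c1)}) - {(u,v),(v,u)}) v"
    (is "good ?R v")
proof -
  have rc: "(rho,c1)\<in>E" "(rho,c2)\<in>E" using ch unfolding children_def by blast+
  have vr: "(v,rho)\<notin>E\<^sup>*"
  proof
    assume "(v,rho)\<in>E\<^sup>*"
    then have "v = rho \<or> v = r0" using anc_rho by blast
    then show False using par_unique[of u v r0] r0_rho uv noin by blast
  qed
  have vc: "(v,c)\<notin>E\<^sup>*" if "c\<in>{c1,c2}" for c
  proof
    assume vc: "(v,c)\<in>E\<^sup>*"
    have rcc: "(rho,c)\<in>E" using that rc by blast
    show False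
    proof (cases "v = c")
      case True then show False using par_unique[OF uv(1)] rcc uv(3) by blast
    next
      case False
      then obtain w where "(v,w)\<in>E\<^sup>*" "(w,c)\<in>E" using vc by (auto elim: rtranclE)
      then show False using par_unique rcc vr by blast
    qed
  qed
  show ?thesis
  proof (rule goodI[where wi=v and wo=c1])
    show "\<forall>a b. (a,b)\<in>?R \<longrightarrow> (b,a)\<in>?R" by (auto simp: B0_def)
  next
    fix a b assume ab: "(a,b)\<in>?R" and va: "(v,a)\<in>E\<^sup>*"
    have "a \<notin> {c1,c2}" using vc va by blast
    then have "(a,b)\<in>B0" "\<not>(a = v \<and> b = u)" using ab by auto
    then show "(v,b)\<in>E\<^sup>*" using clos_core[OF uv(1) _ _ va] by blast
  next
    fix p assume p: "p\<in>leaves V E r0" "(v,p)\<in>E\<^sup>*"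
    show "(v,p)\<in>?R\<^sup>*"
    proof (rule path_lift[OF p(2)], intro allI impI)
      fix w1 w2 assume w: "(v,w1)\<in>E\<^sup>*" "(w1,w2)\<in>E" "(w2,p)\<in>E\<^sup>*"
      have "(v,w2)\<in>E\<^sup>*" using w by (meson rtrancl.rtrancl_into_rtrancl)
      then have "w2 \<noteq> rho" using vr by blast
      moreover have "w1 \<noteq> rho" using w(1) vr by blast
      moreover have "w1 \<noteq> r0" using w(1) not_below_r0 uv noin by metis
      moreover have "w1 \<noteq> u" using w(1) uv(1) no_back by blast
      moreover have "\<not>(w1 = v \<and> w2 = u)" using w(2) uv(1) no_back by (metis r_into_rtrancl)
      ultimately show "(w1,w2)\<in>?R" using w(2) edge_B0 by auto
    qed
  next
    fix p assume p: "p\<in>leaves V E r0" "(v,p)\<notin>E\<^sup>*"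
    have cp: "(c,p)\<in>?R\<^sup>*" if c: "c\<in>{c1,c2}" "(c,p)\<in>E\<^sup>*" for c
    proof (rule path_lift[OF c(2)], intro allI impI)
      fix w1 w2 assume w: "(c,w1)\<in>E\<^sup>*" "(w1,w2)\<in>E" "(w2,p)\<in>E\<^sup>*"
      have cp: "w1\<noteq>r0 \<and> w1\<noteq>rho \<and> w2\<noteq>rho \<and> w2 \<notin> {c1,c2}" using child_path[OF ch(1) c(1) w(1,2)] .
      moreover have "w2 \<noteq> v" using w(3) p(2) by blast
      moreover have "w1 \<noteq> v" using w(2,3) p(2) by (meson converse_rtrancl_into_rtrancl)
      ultimately show "(w1,w2)\<in>?R" using w(2) edge_B0 by auto
    qed
    have c12: "(c1,c2)\<in>?R"
    proof -
      have "c1 \<noteq> rho" using rc(1) no_back by blast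
      then have "\<not>(u = c1 \<and> v = c2)" using par_unique[of u v rho] rc(2) uv(1) by blast
      moreover have "v \<noteq> c1" using vc by blast
      ultimately show ?thesis by auto
    qed
    from leaf_split[OF ch(1) p(1)] show "(c1,p)\<in>?R\<^sup>*"
    proof
      assume "(c1,p)\<in>E\<^sup>*" then show ?thesis using cp by blast
    next
      assume "(c2,p)\<in>E\<^sup>*" then have "(c2,p)\<in>?R\<^sup>*" using cp by blast
      then show ?thesis using c12 by (meson converse_rtrancl_into_rtrancl)
    qed
  qed
qed

lemma core_s2:
  assumes ch: "children E rho = {c,c'}" "c\<noteq>c'"
  shows "good (({(a,b)\<in>B0. a\<noteq>rho \<and> b\<noteq>rho} \<union> {(c,c'),(c',c)}) - {(c,c'),(c',c)}) c"
    (is "good ?R c")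
proof -
  have rc: "(rho,c)\<in>E" "(rho,c')\<in>E" using ch unfolding children_def by blast+
  have pth: "(d,p)\<in>?R\<^sup>*" if d: "d\<in>{c,c'}" "(d,p)\<in>E\<^sup>*" for d p
  proof (rule path_lift[OF d(2)], intro allI impI)
    fix w1 w2 assume w: "(d,w1)\<in>E\<^sup>*" "(w1,w2)\<in>E" "(w2,p)\<in>E\<^sup>*"
    have "w1\<noteq>r0 \<and> w1\<noteq>rho \<and> w2\<noteq>rho \<and> w2 \<notin> {c,c'}" using child_path[OF ch(1) d(1) w(1,2)] .
    then show "(w1,w2)\<in>?R" using w(2) edge_B0 by auto
  qed
  show ?thesis
  proof (rule goodI[where wi=c and wo=c'])
    show "\<forall>a b. (a,b)\<in>?R \<longrightarrow> (b,a)\<in>?R" by (auto simp: B0_def)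
  next
    fix a b assume ab: "(a,b)\<in>?R" and va: "(c,a)\<in>E\<^sup>*"
    have "(a,b)\<in>B0" "\<not>(a = c \<and> b = rho)" using ab by auto
    then show "(c,b)\<in>E\<^sup>*" using clos_core[OF rc(1) _ _ va] by blast
  next
    fix p assume p: "p\<in>leaves V E r0" "(c,p)\<in>E\<^sup>*"
    then show "(c,p)\<in>?R\<^sup>*" using pth by blast
  next
    fix p assume p: "p\<in>leaves V E r0" "(c,p)\<notin>E\<^sup>*"
    then have "(c',p)\<in>E\<^sup>*" using leaf_split[OF ch(1)] by blast
    then show "(c',p)\<in>?R\<^sup>*" using pth by blast
  qed
qed

end

context ptree begin

lemma U_ns: "card (children E rho) \<noteq> 2 \<Longrightarrow> tbar_edges E r0 = B0"
  unfolding tbar_edges_def Let_def rho_def[symmetric] B0_def by simp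

lemma U_s:
  assumes ch: "children E rho = {c1,c2}" "c1\<noteq>c2"
  shows "tbar_edges E r0 = {(a,b)\<in>B0. a\<noteq>rho \<and> b\<noteq>rho} \<union> {(c1,c2),(c2,c1)}"
proof -
  have "card (children E rho) = 2" using ch by simp
  then show ?thesis
    unfolding tbar_edges_def Let_def rho_def[symmetric] B0_def[symmetric] using ch by auto
qed

lemma vfacts: "(u,v)\<in>E \<Longrightarrow> u\<noteq>r0 \<Longrightarrow> v\<in>V \<and> v\<noteq>r0 \<and> v\<noteq>rho"
  using inV1 noin par_unique r0_rho by metis

lemma chfacts: "children E rho = {c1,c2} \<Longrightarrow> c \<in> {c1,c2} \<Longrightarrow> c\<in>V \<and> c\<noteq>r0 \<and> c\<noteq>rho"
  using vfacts[of rho c] rho_ne unfolding children_def by blast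

lemma G1:
  assumes e: "e \<in> tbar_edges E r0"
  shows "\<exists>v\<in>V. v\<noteq>r0 \<and> v\<noteq>rho \<and> good (tbar_edges E r0 - {e, (snd e, fst e)}) v"
proof -
  obtain a b where eab: "e = (a,b)" by (cases e) auto
  show ?thesis
  proof (cases "card (children E rho) = 2")
    case True
    then obtain c1 c2 where ch: "children E rho = {c1,c2}" "c1\<noteq>c2" by (meson card_2_iff)
    note U = U_s[OF ch]
    have "((a,b)\<in>B0 \<and> a\<noteq>rho \<and> b\<noteq>rho) \<or> (a,b) = (c1,c2) \<or> (a,b) = (c2,c1)" using e eab U by auto
    moreover
    {
      assume h: "(a,b)\<in>B0" "a\<noteq>rho" "b\<noteq>rho"
      then consider "(a,b)\<in>E" "a\<noteq>r0" | "(b,a)\<in>E" "b\<noteq>r0" by (auto simp: B0_def)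
      then have ?thesis
      proof cases
        case 1
        have "good (tbar_edges E r0 - {(a,b),(b,a)}) b" using core_s1[OF ch 1 h(2)] U by simp
        then show ?thesis using vfacts[OF 1] eab by auto
      next
        case 2
        have "good (tbar_edges E r0 - {(b,a),(a,b)}) a" using core_s1[OF ch 2 h(3)] U by simp
        then show ?thesis using vfacts[OF 2] eab by (auto simp: insert_commute)
      qed
    }
    moreover
    {
      assume h: "(a,b) = (c1,c2)"
      have "good (tbar_edges E r0 - {(c1,c2),(c2,c1)}) c1" using core_s2[OF ch] U by simp
      then have ?thesis using chfacts[OF ch(1), of c1] h eab by auto
    }
    moreover
    {
      assume h: "(a,b) = (c2,c1)"
      have ch': "children E rho = {c2,c1}" "c2\<noteq>c1" using ch by auto
      have "good (tbar_edges E r0 - {(c2,c1),(c1,c2)}) c2" using core_s2[OF ch'] U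
        by (simp add: insert_commute)
      then have ?thesis using chfacts[OF ch(1), of c2] h eab by auto
    }
    ultimately show ?thesis by blast
  next
    case False
    note U = U_ns[OF False]
    consider "(a,b)\<in>E" "a\<noteq>r0" | "(b,a)\<in>E" "b\<noteq>r0" using e eab U by (auto simp: B0_def)
    then show ?thesis
    proof cases
      case 1
      have "good (tbar_edges E r0 - {(a,b),(b,a)}) b" using core_ns[OF 1] U by simp
      then show ?thesis using vfacts[OF 1] eab by auto
    next
      case 2
      have "good (tbar_edges E r0 - {(b,a),(a,b)}) a" using core_ns[OF 2] U by simp
      then show ?thesis using vfacts[OF 2] eab by (auto simp: insert_commute)
    qed
  qed
qed

lemma G2:
  assumes v: "v\<in>V" "v\<noteq>r0" "v\<noteq>rho"
  shows "\<exists>e\<in>tbar_edges E r0. good (tbar_edges E r0 - {e, (snd e, fst e)}) v"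
proof -
  obtain u where uv: "(u,v)\<in>E" using upar v by blast
  have ur: "u \<noteq> r0" using r0_child uv v by blast
  show ?thesis
  proof (cases "card (children E rho) = 2")
    case True
    then obtain c1 c2 where ch: "children E rho = {c1,c2}" "c1\<noteq>c2" by (meson card_2_iff)
    note U = U_s[OF ch]
    show ?thesis
    proof (cases "u = rho")
      case True
      then have "v \<in> {c1,c2}" using uv ch unfolding children_def by blast
      then consider "v = c1" | "v = c2" by blast
      then show ?thesis
      proof cases
        case 1
        have "good (tbar_edges E r0 - {(c1,c2),(c2,c1)}) c1" using core_s2[OF ch] U by simp
        moreover have "(c1,c2) \<in> tbar_edges E r0" using U by simp
        ultimately show ?thesis using 1 by force
      next
        case 2
        have ch': "children E rho = {c2,c1}" "c2\<noteq>c1" using ch by auto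
        have "good (tbar_edges E r0 - {(c2,c1),(c1,c2)}) c2" using core_s2[OF ch'] U
          by (simp add: insert_commute)
        moreover have "(c2,c1) \<in> tbar_edges E r0" using U by simp
        ultimately show ?thesis using 2 by force
      qed
    next
      case False
      have "good (tbar_edges E r0 - {(u,v),(v,u)}) v" using core_s1[OF ch uv ur False] U by simp
      moreover have "(u,v) \<in> tbar_edges E r0" using U edge_B0[OF uv ur] False v by simp
      ultimately show ?thesis by force
    qed
  next
    case False
    note U = U_ns[OF False]
    have "good (tbar_edges E r0 - {(u,v),(v,u)}) v" using core_ns[OF uv ur] U by simp
    moreover have "(u,v) \<in> tbar_edges E r0" using U edge_B0[OF uv ur] by simp
    ultimately show ?thesis by force
  qed
qed

lemma QC:
  assumes L: "p\<in>leaves V E r0" "q\<in>leaves V E r0" "r\<in>leaves V E r0" "s\<in>leaves V E r0"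
  shows "quartet E r0 p q r s \<longleftrightarrow> (\<exists>v\<in>V. v\<noteq>r0 \<and> v\<noteq>rho \<and>
     ((v,p)\<in>E\<^sup>* \<longleftrightarrow> (v,q)\<in>E\<^sup>*) \<and> ((v,r)\<in>E\<^sup>* \<longleftrightarrow> (v,s)\<in>E\<^sup>*) \<and> ((v,p)\<in>E\<^sup>* \<longleftrightarrow> (v,r)\<notin>E\<^sup>*))"
proof
  assume "quartet E r0 p q r s"
  then obtain e where e: "e \<in> tbar_edges E r0"
    and sep: "(p,q)\<in>(tbar_edges E r0 - {e, (snd e, fst e)})\<^sup>*" "(r,s)\<in>(tbar_edges E r0 - {e, (snd e, fst e)})\<^sup>*"
      "(p,r)\<notin>(tbar_edges E r0 - {e, (snd e, fst e)})\<^sup>*"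
    unfolding quartet_def separates_def Let_def by blast
  obtain v where v: "v\<in>V" "v\<noteq>r0" "v\<noteq>rho" "good (tbar_edges E r0 - {e, (snd e, fst e)}) v"
    using G1[OF e] by blast
  have g: "\<And>a b. a\<in>leaves V E r0 \<Longrightarrow> b\<in>leaves V E r0 \<Longrightarrow>
     (a,b)\<in>(tbar_edges E r0 - {e, (snd e, fst e)})\<^sup>* \<longleftrightarrow> ((v,a)\<in>E\<^sup>* \<longleftrightarrow> (v,b)\<in>E\<^sup>*)"
    using v(4) unfolding good_def by blast
  show "\<exists>v\<in>V. v\<noteq>r0 \<and> v\<noteq>rho \<and>
     ((v,p)\<in>E\<^sup>* \<longleftrightarrow> (v,q)\<in>E\<^sup>*) \<and> ((v,r)\<in>E\<^sup>* \<longleftrightarrow> (v,s)\<in>E\<^sup>*) \<and> ((v,p)\<in>E\<^sup>* \<longleftrightarrow> (v,r)\<notin>E\<^sup>*)"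
    using v(1-3) g[OF L(1,2)] g[OF L(3,4)] g[OF L(1,3)] sep by blast
next
  assume "\<exists>v\<in>V. v\<noteq>r0 \<and> v\<noteq>rho \<and>
     ((v,p)\<in>E\<^sup>* \<longleftrightarrow> (v,q)\<in>E\<^sup>*) \<and> ((v,r)\<in>E\<^sup>* \<longleftrightarrow> (v,s)\<in>E\<^sup>*) \<and> ((v,p)\<in>E\<^sup>* \<longleftrightarrow> (v,r)\<notin>E\<^sup>*)"
  then obtain v where v: "v\<in>V" "v\<noteq>r0" "v\<noteq>rho" "(v,p)\<in>E\<^sup>* \<longleftrightarrow> (v,q)\<in>E\<^sup>*"
    "(v,r)\<in>E\<^sup>* \<longleftrightarrow> (v,s)\<in>E\<^sup>*" "(v,p)\<in>E\<^sup>* \<longleftrightarrow> (v,r)\<notin>E\<^sup>*" by blast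
  obtain e where e: "e \<in> tbar_edges E r0" "good (tbar_edges E r0 - {e, (snd e, fst e)}) v"
    using G2[OF v(1-3)] by blast
  have g: "\<And>a b. a\<in>leaves V E r0 \<Longrightarrow> b\<in>leaves V E r0 \<Longrightarrow>
     (a,b)\<in>(tbar_edges E r0 - {e, (snd e, fst e)})\<^sup>* \<longleftrightarrow> ((v,a)\<in>E\<^sup>* \<longleftrightarrow> (v,b)\<in>E\<^sup>*)"
    using e(2) unfolding good_def by blast
  have "separates (tbar_edges E r0) e p q r s"
    unfolding separates_def Let_def using e(1) g[OF L(1,2)] g[OF L(3,4)] g[OF L(1,3)] v(4-6) by blast
  then show "quartet E r0 p q r s" unfolding quartet_def by blast
qed

end

context ptree begin

lemma lca_ex:
  assumes A: "A \<subseteq> V" "A \<noteq> {}"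
  shows "lca V E A \<in> V \<and> (\<forall>a\<in>A. (lca V E A, a)\<in>E\<^sup>*) \<and>
         (\<forall>w\<in>V. (\<forall>a\<in>A. (w,a)\<in>E\<^sup>*) \<longrightarrow> (w, lca V E A)\<in>E\<^sup>*)"
proof -
  define P where "P = (\<lambda>v. v \<in> V \<and> (\<forall>a\<in>A. anc_le E a v) \<and>
                   (\<forall>w\<in>V. (\<forall>a\<in>A. anc_le E a w) \<longrightarrow> anc_le E v w))"
  define C where "C = {v\<in>V. \<forall>a\<in>A. (v,a)\<in>E\<^sup>*}"
  have r0C: "r0\<in>C" using reach r0V A by (auto simp: C_def)
  have finE: "finite E" using EV finV by (meson finite_SigmaI finite_subset)
  have acy: "acyclic E" unfolding acyclic_def using no_cycle by blast
  have "wf (E\<inverse>)" using finite_acyclic_wf_converse[OF finE acy] .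
  then have wf: "wf ((E\<inverse>)\<^sup>+)" by (rule wf_trancl)
  obtain m where m: "m\<in>C" "\<And>y. (y,m)\<in>(E\<inverse>)\<^sup>+ \<Longrightarrow> y\<notin>C"
    using wfE_min[OF wf r0C] by blast
  obtain a0 where a0: "a0\<in>A" using A by blast
  have low: "(w,m)\<in>E\<^sup>*" if w: "w\<in>C" for w
  proof -
    have "(w,a0)\<in>E\<^sup>*" "(m,a0)\<in>E\<^sup>*" using w m(1) a0 by (auto simp: C_def)
    then have "(w,m)\<in>E\<^sup>* \<or> (m,w)\<in>E\<^sup>*" using chain by blast
    moreover have "\<not> (m,w)\<in>E\<^sup>+"
    proof
      assume "(m,w)\<in>E\<^sup>+"
      then have "(w,m)\<in>(E\<inverse>)\<^sup>+" by (simp add: trancl_converse)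
      then show False using m(2) w by blast
    qed
    ultimately show ?thesis by (metis rtrancl_eq_or_trancl rtrancl.rtrancl_refl)
  qed
  have Pm: "P m" using m(1) low unfolding P_def C_def anc_le_def by blast
  have uniq: "v = m" if "P v" for v
    using that Pm anti unfolding P_def anc_le_def by blast
  have "P (lca V E A)" unfolding lca_def P_def[symmetric] using Pm uniq by (rule theI)
  then show ?thesis unfolding P_def anc_le_def by blast
qed

definition better where "better x a b \<longleftrightarrow> (\<forall>v. (v,x)\<in>E\<^sup>* \<longrightarrow> (v,a)\<in>E\<^sup>* \<longrightarrow> (v,b)\<in>E\<^sup>*)"

lemma better_refl: "better x a a" unfolding better_def by blast
lemma better_trans: "better x a b \<Longrightarrow> better x b c \<Longrightarrow> better x a c" unfolding better_def by blast
lemma better_total: "better x a b \<or> better x b a"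
proof (rule ccontr)
  assume "\<not> (better x a b \<or> better x b a)"
  then obtain w v where w: "(w,x)\<in>E\<^sup>*" "(w,a)\<in>E\<^sup>*" "(w,b)\<notin>E\<^sup>*"
    and v: "(v,x)\<in>E\<^sup>*" "(v,b)\<in>E\<^sup>*" "(v,a)\<notin>E\<^sup>*" unfolding better_def by blast
  have "(w,v)\<in>E\<^sup>* \<or> (v,w)\<in>E\<^sup>*" using chain w(1) v(1) by blast
  then show False using w v rtrancl_trans by metis
qed

lemma better_lca:
  assumes "x\<in>V" "a\<in>V" "b\<in>V"
  shows "anc_le E (lca V E {x,b}) (lca V E {x,a}) \<longleftrightarrow> better x a b"
proof -
  have la: "lca V E {x,a} \<in> V" "(lca V E {x,a}, x)\<in>E\<^sup>*" "(lca V E {x,a}, a)\<in>E\<^sup>*"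
    "\<And>w. w\<in>V \<Longrightarrow> (w,x)\<in>E\<^sup>* \<Longrightarrow> (w,a)\<in>E\<^sup>* \<Longrightarrow> (w, lca V E {x,a})\<in>E\<^sup>*"
    using lca_ex[of "{x,a}"] assms by auto
  have lb: "lca V E {x,b} \<in> V" "(lca V E {x,b}, x)\<in>E\<^sup>*" "(lca V E {x,b}, b)\<in>E\<^sup>*"
    "\<And>w. w\<in>V \<Longrightarrow> (w,x)\<in>E\<^sup>* \<Longrightarrow> (w,b)\<in>E\<^sup>* \<Longrightarrow> (w, lca V E {x,b})\<in>E\<^sup>*"
    using lca_ex[of "{x,b}"] assms by auto
  show ?thesis unfolding anc_le_def
  proof
    assume h: "(lca V E {x,a}, lca V E {x,b})\<in>E\<^sup>*"
    show "better x a b" unfolding better_def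
    proof (intro allI impI)
      fix v assume v: "(v,x)\<in>E\<^sup>*" "(v,a)\<in>E\<^sup>*"
      have "v\<in>V" using inV_star v(1) assms(1) by blast
      then have "(v, lca V E {x,a})\<in>E\<^sup>*" using la(4) v by blast
      then show "(v,b)\<in>E\<^sup>*" using h lb(3) rtrancl_trans by metis
    qed
  next
    assume "better x a b"
    then have "(lca V E {x,a}, b)\<in>E\<^sup>*" using la(2,3) unfolding better_def by blast
    then show "(lca V E {x,a}, lca V E {x,b})\<in>E\<^sup>*" using lb(4) la(1,2) by blast
  qed
qed

lemma outg:
  assumes o: "outgroup V E r0 L' z" and ne: "L' \<noteq> {}"
  shows "(\<forall>y\<in>L'. (lca V E L', y)\<in>E\<^sup>*) \<and> (lca V E L', z)\<notin>E\<^sup>*"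
proof -
  have L: "L' \<subseteq> leaves V E r0" "z \<in> leaves V E r0" "anc_less E (lca V E L') (lca V E (L' \<union> {z}))"
    using o unfolding outgroup_def by auto
  have LV: "L' \<subseteq> V" "z\<in>V" using L leafD by blast+
  have l1: "lca V E L' \<in> V" "\<forall>y\<in>L'. (lca V E L', y)\<in>E\<^sup>*" using lca_ex[OF LV(1) ne] by blast+
  have l2: "\<forall>w\<in>V. (\<forall>a\<in>L' \<union> {z}. (w,a)\<in>E\<^sup>*) \<longrightarrow> (w, lca V E (L' \<union> {z}))\<in>E\<^sup>*"
    "(lca V E (L' \<union> {z}), lca V E L')\<in>E\<^sup>*" "lca V E (L' \<union> {z}) \<noteq> lca V E L'"
    using lca_ex[of "L' \<union> {z}"] LV L(3) unfolding anc_less_def anc_le_def by auto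
  have "(lca V E L', z)\<notin>E\<^sup>*"
  proof
    assume "(lca V E L', z)\<in>E\<^sup>*"
    then have "(lca V E L', lca V E (L' \<union> {z}))\<in>E\<^sup>*" using l2(1) l1 by blast
    then show False using anti l2(2,3) by blast
  qed
  then show ?thesis using l1 by blast
qed

lemma L1:
  assumes L: "x\<in>leaves V E r0" "a\<in>leaves V E r0" "b\<in>leaves V E r0" "z\<in>leaves V E r0"
    and u: "(u,x)\<in>E\<^sup>*" "(u,b)\<in>E\<^sup>*" "(u,z)\<notin>E\<^sup>*" and bt: "better x a b"
  shows "\<not> quartet E r0 x a b z"
proof
  assume "quartet E r0 x a b z"
  then obtain v where v: "((v,x)\<in>E\<^sup>* \<longleftrightarrow> (v,a)\<in>E\<^sup>*)" "((v,b)\<in>E\<^sup>* \<longleftrightarrow> (v,z)\<in>E\<^sup>*)"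
     "((v,x)\<in>E\<^sup>* \<longleftrightarrow> (v,b)\<notin>E\<^sup>*)" using QC[OF L] by blast
  show False
  proof (cases "(v,x)\<in>E\<^sup>*")
    case True then show False using v bt unfolding better_def by blast
  next
    case False
    then have vb: "(v,b)\<in>E\<^sup>*" "(v,z)\<in>E\<^sup>*" using v by blast+
    then have "(v,u)\<in>E\<^sup>* \<or> (u,v)\<in>E\<^sup>*" using chain u(2) by blast
    then show False using False vb u rtrancl_trans by metis
  qed
qed

lemma L2:
  assumes L: "x\<in>leaves V E r0" "a\<in>leaves V E r0" "b\<in>leaves V E r0" "z\<in>leaves V E r0"
    and u: "(u,a)\<in>E\<^sup>*" "(u,b)\<in>E\<^sup>*" "(u,z)\<notin>E\<^sup>*" and bt: "\<not> better x a b"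
  shows "quartet E r0 x a b z"
proof -
  obtain w where w: "(w,x)\<in>E\<^sup>*" "(w,a)\<in>E\<^sup>*" "(w,b)\<notin>E\<^sup>*" using bt unfolding better_def by blast
  have wV: "w\<in>V" using inV_star w(1) leafD L(1) by blast
  have "w \<noteq> r0" using reach leafD L(3) w(3) by blast
  moreover have "w \<noteq> rho" using rho_anc leafD L(3) w(3) by blast
  moreover have "(w,z)\<notin>E\<^sup>*"
  proof
    assume wz: "(w,z)\<in>E\<^sup>*"
    have "(w,u)\<in>E\<^sup>* \<or> (u,w)\<in>E\<^sup>*" using chain u(1) w(2) by blast
    then show False using wz w(3) u rtrancl_trans by metis
  qed
  ultimately show ?thesis using QC[OF L] wV w by blast
qed

lemma L3:
  assumes L: "x\<in>leaves V E r0" "a\<in>leaves V E r0" "b\<in>leaves V E r0" "z\<in>leaves V E r0"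
    and u: "(u,x)\<in>E\<^sup>*" "(u,a)\<in>E\<^sup>*" "(u,z)\<notin>E\<^sup>*" and bt: "\<not> better x a b"
  shows "\<not> quartet E r0 x z a b"
proof
  assume "quartet E r0 x z a b"
  then obtain v where v: "((v,x)\<in>E\<^sup>* \<longleftrightarrow> (v,z)\<in>E\<^sup>*)" "((v,a)\<in>E\<^sup>* \<longleftrightarrow> (v,b)\<in>E\<^sup>*)"
     "((v,x)\<in>E\<^sup>* \<longleftrightarrow> (v,a)\<notin>E\<^sup>*)" using QC[OF L(1,4,2,3)] by blast
  obtain w where w: "(w,x)\<in>E\<^sup>*" "(w,a)\<in>E\<^sup>*" "(w,b)\<notin>E\<^sup>*" using bt unfolding better_def by blast
  show False
  proof (cases "(v,x)\<in>E\<^sup>*")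
    case True
    then have vv: "(v,z)\<in>E\<^sup>*" "(v,a)\<notin>E\<^sup>*" using v by blast+
    have "(v,u)\<in>E\<^sup>* \<or> (u,v)\<in>E\<^sup>*" using chain u(1) True by blast
    then show False using vv u rtrancl_trans by metis
  next
    case False
    then have vv: "(v,a)\<in>E\<^sup>*" "(v,b)\<in>E\<^sup>*" using v by blast+
    have "(v,w)\<in>E\<^sup>* \<or> (w,v)\<in>E\<^sup>*" using chain vv(1) w(2) by blast
    then show False using False vv w rtrancl_trans by metis
  qed
qed

lemma arc_iff:
  assumes L: "x\<in>leaves V E r0" "a\<in>leaves V E r0" "b\<in>leaves V E r0" "z\<in>leaves V E r0"
    and u: "(u,x)\<in>E\<^sup>*" "(u,a)\<in>E\<^sup>*" "(u,b)\<in>E\<^sup>*" "(u,z)\<notin>E\<^sup>*"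
  shows "(quartet E r0 x z a b \<or> quartet_star E r0 x a b z \<or> quartet E r0 x b a z) \<longleftrightarrow> better x a b"
proof
  assume bt: "better x a b"
  have "\<not> quartet E r0 x a b z" using L1[OF L u(1,3,4) bt] .
  then show "quartet E r0 x z a b \<or> quartet_star E r0 x a b z \<or> quartet E r0 x b a z"
    unfolding quartet_star_def by blast
next
  assume h: "quartet E r0 x z a b \<or> quartet_star E r0 x a b z \<or> quartet E r0 x b a z"
  show "better x a b"
  proof (rule ccontr)
    assume bt: "\<not> better x a b"
    have 1: "quartet E r0 x a b z" using L2[OF L u(2,3,4) bt] .
    have 2: "\<not> quartet E r0 x z a b" using L3[OF L u(1,2,4) bt] .
    have "better x b a" using bt better_total by blast
    then have 3: "\<not> quartet E r0 x b a z" using L1[OF L(1,3,2,4) u(1,2,4)] by blast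
    show False using h 1 2 3 unfolding quartet_star_def by blast
  qed
qed

end

theorem theorem1:
  fixes V :: "'v set" and E :: "('v \<times> 'v) set" and r0 :: 'v
    and \<sigma> :: "'v \<Rightarrow> 's" and S :: "'s set"
    and x :: 'v and s :: 's and Y Z :: "'v set" and ch :: "'v \<Rightarrow> 'v \<Rightarrow> 'v"
  assumes T: "planted_phylo_tree V E r0"
    and sigma: "\<sigma> ` leaves V E r0 = S"
    and x: "x \<in> leaves V E r0"
    and s: "s \<in> S" "s \<noteq> \<sigma> x"
    and Y_sub: "Y \<subseteq> {y \<in> leaves V E r0. \<sigma> y = s}"
    and Y_bm: "{y \<in> leaves V E r0. \<sigma> y = s \<and> best_match V E r0 \<sigma> x y} \<subseteq> Y"
    and Z: "Z \<subseteq> leaves V E r0" "Z \<noteq> {}"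
    and Z_out: "\<forall>z\<in>Z. outgroup V E r0 (Y \<union> {x}) z"
    and ch_in: "\<forall>y'\<in>Y. \<forall>y''\<in>Y. y' \<noteq> y'' \<longrightarrow> ch y' y'' \<in> Z"
    and ch_sym: "\<forall>y'\<in>Y. \<forall>y''\<in>Y. ch y' y'' = ch y'' y'"
  shows "(\<exists>!B. is_scc Y (gamma_arcs E r0 x Y ch) B \<and> \<not> has_out_edge (gamma_arcs E r0 x Y ch) B)
         \<and> (\<forall>B. is_scc Y (gamma_arcs E r0 x Y ch) B \<and> \<not> has_out_edge (gamma_arcs E r0 x Y ch) B
              \<longrightarrow> B = {y \<in> leaves V E r0. \<sigma> y = s \<and> best_match V E r0 \<sigma> x y})"
proof -
  interpret ptree V E r0 by unfold_locales (rule T)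
  define Lv where "Lv = leaves V E r0"
  have LvV: "Lv \<subseteq> V" unfolding Lv_def using leafD by blast
  have finLv: "finite Lv" using LvV finV finite_subset by blast
  define u where "u = lca V E (Y \<union> {x})"
  have uz: "(\<forall>y\<in>Y \<union> {x}. (u, y)\<in>E\<^sup>*) \<and> (u, z)\<notin>E\<^sup>*" if "z\<in>Z" for z
    using outg[of "Y \<union> {x}" z] Z_out that unfolding u_def by blast
  have xV: "x\<in>V" using x LvV Lv_def by blast
  have gam: "gamma_arcs E r0 x Y ch = {(a,b). a\<in>Y \<and> b\<in>Y \<and> a\<noteq>b \<and> better x a b}"
  proof (intro set_eqI iffI)
    fix p assume "p \<in> gamma_arcs E r0 x Y ch"
    then obtain a b where p: "p = (a,b)" "a\<in>Y" "b\<in>Y" "a\<noteq>b"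
      and q: "quartet E r0 x (ch a b) a b \<or> quartet_star E r0 x a b (ch a b) \<or> quartet E r0 x b a (ch a b)"
      unfolding gamma_arcs_def by blast
    have z: "ch a b \<in> Z" using ch_in p by blast
    have "better x a b"
      using arc_iff[of x a b "ch a b" u] q z uz[OF z] x Y_sub Z p by blast
    then show "p \<in> {(a,b). a\<in>Y \<and> b\<in>Y \<and> a\<noteq>b \<and> better x a b}" using p by blast
  next
    fix p assume "p \<in> {(a,b). a\<in>Y \<and> b\<in>Y \<and> a\<noteq>b \<and> better x a b}"
    then obtain a b where p: "p = (a,b)" "a\<in>Y" "b\<in>Y" "a\<noteq>b" "better x a b" by blast
    have z: "ch a b \<in> Z" using ch_in p by blast
    have "quartet E r0 x (ch a b) a b \<or> quartet_star E r0 x a b (ch a b) \<or> quartet E r0 x b a (ch a b)"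
      using arc_iff[of x a b "ch a b" u] p(5) z uz[OF z] x Y_sub Z p(2,3) by blast
    then show "p \<in> gamma_arcs E r0 x Y ch" unfolding gamma_arcs_def using p by blast
  qed
  define Ls where "Ls = {y\<in>Lv. \<sigma> y = s}"
  have bm: "best_match V E r0 \<sigma> x y \<longleftrightarrow> (\<forall>y'\<in>Ls. better x y' y)" if y: "y\<in>Ls" for y
  proof -
    have yV: "y\<in>V" using y LvV Ls_def by blast
    have "best_match V E r0 \<sigma> x y \<longleftrightarrow> (\<forall>y'\<in>Lv. \<sigma> y' = \<sigma> y \<longrightarrow> better x y' y)"
      unfolding best_match_def using x y yV xV better_lca LvV unfolding Lv_def Ls_def by blast
    then show ?thesis using y unfolding Ls_def by auto
  qed
  have finLs: "finite Ls" using finLv Ls_def by simp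
  have neLs: "Ls \<noteq> {}" using s sigma unfolding Ls_def Lv_def by blast
  have tot: "\<forall>a b. better x a b \<or> better x b a" using better_total by blast
  have tr: "\<forall>a b c. better x a b \<longrightarrow> better x b c \<longrightarrow> better x a c" using better_trans by blast
  obtain m where m: "m\<in>Ls" "\<forall>y\<in>Ls. better x y m" using max_ex[OF finLs neLs tot tr] by blast
  have BMeq: "{y \<in> leaves V E r0. \<sigma> y = s \<and> best_match V E r0 \<sigma> x y} = {y\<in>Ls. \<forall>y'\<in>Ls. better x y' y}"
    using bm unfolding Ls_def Lv_def by blast
  have YLs: "Y \<subseteq> Ls" using Y_sub unfolding Ls_def Lv_def by blast
  have mY: "m\<in>Y" using m Y_bm BMeq by blast
  have Meq: "{y\<in>Ls. \<forall>y'\<in>Ls. better x y' y} = {y\<in>Y. \<forall>y'\<in>Y. better x y' y}"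
  proof (intro set_eqI iffI)
    fix y assume "y \<in> {y\<in>Ls. \<forall>y'\<in>Ls. better x y' y}"
    then show "y \<in> {y\<in>Y. \<forall>y'\<in>Y. better x y' y}" using Y_bm BMeq YLs by blast
  next
    fix y assume h: "y \<in> {y\<in>Y. \<forall>y'\<in>Y. better x y' y}"
    then have "better x m y" using mY by blast
    then have "\<forall>y'\<in>Ls. better x y' y" using m(2) better_trans by blast
    then show "y \<in> {y\<in>Ls. \<forall>y'\<in>Ls. better x y' y}" using h YLs by blast
  qed
  have finY: "finite Y" using YLs finLs finite_subset by blast
  have neY: "Y \<noteq> {}" using mY by blast
  have rf: "\<forall>a. better x a a" using better_refl by blast
  show ?thesis
    unfolding BMeq Meq
    using scc_part[OF rf tr tot finY neY gam] .
qed

end
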